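(* Let $A$ be a Type I$_k$ weight matrix with $V_A$ faithful, and consider the Hilbert map $\Pi:V_A\to\mathbb R^\ell\times\mathbb C^{k^2}\times\mathbb C^N$, $\boldsymbol z\mapsto\big((r_i(\boldsymbol z))_i,(p_{i,j}(\boldsymbol z))_{i,j},(q_{\boldsymbol s}(\boldsymbol z))_{\boldsymbol s}\big)$, $N=\binom{\alpha+k-1}{k-1}$ (whose real and imaginary parts form a real Hilbert basis). Then $\Pi(Z_A)$ equals the set of tuples $(r_i,p_{i,j},q_{\boldsymbol s})$ such that $p_{i,j}=\overline{p_{j,i}}$ for all $i,j$, the relations (1)–(6) of Proposition 4.2 hold (with $R_i,P_{i,j},Q_{\boldsymbol s},\overline Q_{\boldsymbol s}$ evaluated at $r_i,p_{i,j},q_{\boldsymbol s},\overline{q_{\boldsymbol s}}$, the latter being the complex conjugate of $q_{\boldsymbol s}$), the moment map relations $-a_ir_i+n_i\sum_{j=1}^kp_{j,j}=0$ hold for $i=1,\dots,\ell$, and the inequalities $r_i\ge0$ ($1\le i\le\ell$) and $p_{j,j}\ge0$ ($1\le j\le k$) hold.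
   Context: Type I$_k$: $A=[D,\boldsymbol n,\dots,\boldsymbol n]\in\mathbb Z^{\ell\times(\ell+k)}$ with $D=\operatorname{diag}(-a_1,\dots,-a_\ell)$, $a_i>0$, $\boldsymbol n=(n_1,\dots,n_\ell)^T$, $n_i>0$; $V_A=\mathbb C^{\ell+k}$ with $\mathbb T^\ell$ acting by $z_j\mapsto\prod_it_i^{a_{ij}}z_j$, faithful = effective; shell $Z_A$ = common zero set of $\tfrac12\sum_ja_{ij}z_j\overline{z_j}$. $\alpha=\operatorname{lcm}(a_i)$, $m_i=n_i\alpha/a_i$. Invariants $r_i=z_i\overline{z_i}$, $p_{i,j}=z_{\ell+i}\overline{z_{\ell+j}}$, $q_{\boldsymbol s}=\prod_{i\le\ell}z_i^{m_i}\prod_{i\le k}z_{\ell+i}^{s_i}$ ($\boldsymbol s\in\mathbb Z^k_{\ge0}$, $\sum s_i=\alpha$). Relations of Proposition 4.2: (1) $P_{g,h}P_{i,j}-P_{g,j}P_{i,h}$; (2) $P_{g,h}Q_{\boldsymbol s}-P_{i,h}Q_{\boldsymbol s'}$ with $s'_g=s_g+1$, $s'_i=s_i-1$, other entries equal; (3) $P_{g,h}\overline Q_{\boldsymbol s}-P_{g,i}\overline Q_{\boldsymbol s'}$ with $s'_h=s_h+1$, $s'_i=s_i-1$, other entries equal; (4) $Q_{\boldsymbol s}Q_{\boldsymbol s'}-Q_{\boldsymbol t}Q_{\boldsymbol t'}$ and (5) $\overline Q_{\boldsymbol s}\overline Q_{\boldsymbol s'}-\overline Q_{\boldsymbol t}\overline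 Q_{\boldsymbol t'}$ whenever $\boldsymbol s+\boldsymbol s'=\boldsymbol t+\boldsymbol t'$; (6) $\prod_iR_i^{m_i}\prod_{j=1}^\alpha P_{g_j,h_j}-Q_{\boldsymbol s}\overline Q_{\boldsymbol s'}$, where $g$ appears $s_g$ times among the $g_j$ and $h$ appears $s'_h$ times among the $h_j$. *)

theory Defs
  imports Complex_Main
begin

text \<open>Conventions: indices are 0-based. Coordinates of V_A = C^(l+k) are z 0, ..., z (l+k-1);
  a vector is a function nat => complex vanishing at indices >= l+k.\<close>

definition typeI_matrix :: "nat \<Rightarrow> (nat \<Rightarrow> nat) \<Rightarrow> (nat \<Rightarrow> nat) \<Rightarrow> nat \<Rightarrow> nat \<Rightarrow> int" where
  "typeI_matrix l a n i j = (if j < l then (if i = j then - int (a i) else 0) else int (n i))"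

definition in_VA :: "nat \<Rightarrow> nat \<Rightarrow> (nat \<Rightarrow> complex) \<Rightarrow> bool" where
  "in_VA l k z \<longleftrightarrow> (\<forall>j\<ge>l+k. z j = 0)"

definition torus_act :: "(nat \<Rightarrow> nat \<Rightarrow> int) \<Rightarrow> nat \<Rightarrow> nat \<Rightarrow> (nat \<Rightarrow> complex) \<Rightarrow> (nat \<Rightarrow> complex) \<Rightarrow> (nat \<Rightarrow> complex)" where
  "torus_act A l k t z = (\<lambda>j. if j < l + k then (\<Prod>i<l. t i powi A i j) * z j else z j)"

definition faithful :: "(nat \<Rightarrow> nat \<Rightarrow> int) \<Rightarrow> nat \<Rightarrow> nat \<Rightarrow> bool" where
  "faithful A l k \<longleftrightarrow>
     (\<forall>t. (\<forall>i<l. norm (t i) = 1) \<longrightarrow> (\<forall>z. in_VA l k z \<longrightarrow> torus_act A l k t z = z) \<longrightarrow> (\<forall>i<l. t i = 1))"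

text \<open>Shell Z_A: common zero set of the homogeneous quadratic moment map components.\<close>
definition shell :: "(nat \<Rightarrow> nat \<Rightarrow> int) \<Rightarrow> nat \<Rightarrow> nat \<Rightarrow> (nat \<Rightarrow> complex) set" where
  "shell A l k = {z. in_VA l k z \<and>
     (\<forall>i<l. (1/2) * (\<Sum>j<l+k. of_int (A i j) * (z j * cnj (z j))) = 0)}"

definition alpha :: "nat \<Rightarrow> (nat \<Rightarrow> nat) \<Rightarrow> nat" where
  "alpha l a = Lcm (a ` {..<l})"

definition mexp :: "nat \<Rightarrow> (nat \<Rightarrow> nat) \<Rightarrow> (nat \<Rightarrow> nat) \<Rightarrow> nat \<Rightarrow> nat" where
  "mexp l a n i = n i * alpha l a div a i"

definition Sset :: "nat \<Rightarrow> nat \<Rightarrow> (nat \<Rightarrow> nat) \<Rightarrow> (nat \<Rightarrow> nat) set" where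
  "Sset l k a = {s. (\<forall>i\<ge>k. s i = 0) \<and> (\<Sum>i<k. s i) = alpha l a}"

definition inv_r :: "nat \<Rightarrow> (nat \<Rightarrow> complex) \<Rightarrow> nat \<Rightarrow> real" where
  "inv_r l z i = (if i < l then Re (z i * cnj (z i)) else 0)"

definition inv_p :: "nat \<Rightarrow> nat \<Rightarrow> (nat \<Rightarrow> complex) \<Rightarrow> nat \<Rightarrow> nat \<Rightarrow> complex" where
  "inv_p l k z i j = (if i < k \<and> j < k then z (l+i) * cnj (z (l+j)) else 0)"

definition inv_q :: "nat \<Rightarrow> nat \<Rightarrow> (nat \<Rightarrow> nat) \<Rightarrow> (nat \<Rightarrow> nat) \<Rightarrow> (nat \<Rightarrow> complex) \<Rightarrow> (nat \<Rightarrow> nat) \<Rightarrow> complex" where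
  "inv_q l k a n z s = (if s \<in> Sset l k a
      then (\<Prod>i<l. z i ^ mexp l a n i) * (\<Prod>i<k. z (l+i) ^ s i) else 0)"

text \<open>Hilbert map Pi (components outside the index ranges are set to 0).\<close>
definition hilbert_map :: "nat \<Rightarrow> nat \<Rightarrow> (nat \<Rightarrow> nat) \<Rightarrow> (nat \<Rightarrow> nat) \<Rightarrow> (nat \<Rightarrow> complex)
     \<Rightarrow> (nat \<Rightarrow> real) \<times> (nat \<Rightarrow> nat \<Rightarrow> complex) \<times> ((nat \<Rightarrow> nat) \<Rightarrow> complex)" where
  "hilbert_map l k a n z = (inv_r l z, inv_p l k z, inv_q l k a n z)"

definition image_desc :: "nat \<Rightarrow> nat \<Rightarrow> (nat \<Rightarrow> nat) \<Rightarrow> (nat \<Rightarrow> nat)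
     \<Rightarrow> ((nat \<Rightarrow> real) \<times> (nat \<Rightarrow> nat \<Rightarrow> complex) \<times> ((nat \<Rightarrow> nat) \<Rightarrow> complex)) set" where
  "image_desc l k a n = {(r, p, q).
     \<comment> \<open>components outside the index ranges vanish\<close>
     (\<forall>i\<ge>l. r i = 0) \<and> (\<forall>i j. \<not> (i < k \<and> j < k) \<longrightarrow> p i j = 0) \<and>
     (\<forall>s. s \<notin> Sset l k a \<longrightarrow> q s = 0) \<and>
     \<comment> \<open>hermitian\<close>
     (\<forall>i<k. \<forall>j<k. p i j = cnj (p j i)) \<and>
     \<comment> \<open>(1)\<close>
     (\<forall>g<k. \<forall>h<k. \<forall>i<k. \<forall>j<k. p g h * p i j - p g j * p i h = 0) \<and>
     \<comment> \<open>(2)\<close>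
     (\<forall>g<k. \<forall>h<k. \<forall>i<k. \<forall>s\<in>Sset l k a. \<forall>s'\<in>Sset l k a.
        s' g = s g + 1 \<and> s' i + 1 = s i \<and> (\<forall>m. m \<noteq> g \<and> m \<noteq> i \<longrightarrow> s' m = s m) \<longrightarrow>
        p g h * q s - p i h * q s' = 0) \<and>
     \<comment> \<open>(3)\<close>
     (\<forall>g<k. \<forall>h<k. \<forall>i<k. \<forall>s\<in>Sset l k a. \<forall>s'\<in>Sset l k a.
        s' h = s h + 1 \<and> s' i + 1 = s i \<and> (\<forall>m. m \<noteq> h \<and> m \<noteq> i \<longrightarrow> s' m = s m) \<longrightarrow>
        p g h * cnj (q s) - p g i * cnj (q s') = 0) \<and>
     \<comment> \<open>(4)\<close>
     (\<forall>s\<in>Sset l k a. \<forall>s'\<in>Sset l k a. \<forall>t\<in>Sset l k a. \<forall>t'\<in>Sset l k a.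
        (\<forall>m. s m + s' m = t m + t' m) \<longrightarrow> q s * q s' - q t * q t' = 0) \<and>
     \<comment> \<open>(5)\<close>
     (\<forall>s\<in>Sset l k a. \<forall>s'\<in>Sset l k a. \<forall>t\<in>Sset l k a. \<forall>t'\<in>Sset l k a.
        (\<forall>m. s m + s' m = t m + t' m) \<longrightarrow> cnj (q s) * cnj (q s') - cnj (q t) * cnj (q t') = 0) \<and>
     \<comment> \<open>(6)\<close>
     (\<forall>gs hs :: nat \<Rightarrow> nat. \<forall>s\<in>Sset l k a. \<forall>s'\<in>Sset l k a.
        (\<forall>j<alpha l a. gs j < k \<and> hs j < k) \<and>
        (\<forall>c<k. card {j. j < alpha l a \<and> gs j = c} = s c) \<and>
        (\<forall>c<k. card {j. j < alpha l a \<and> hs j = c} = s' c) \<longrightarrow>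
        (\<Prod>i<l. complex_of_real (r i) ^ mexp l a n i) * (\<Prod>j<alpha l a. p (gs j) (hs j))
          - q s * cnj (q s') = 0) \<and>
     \<comment> \<open>moment map relations\<close>
     (\<forall>i<l. - of_nat (a i) * complex_of_real (r i) + of_nat (n i) * (\<Sum>j<k. p j j) = 0) \<and>
     \<comment> \<open>inequalities\<close>
     (\<forall>i<l. r i \<ge> 0) \<and> (\<forall>j<k. Im (p j j) = 0 \<and> Re (p j j) \<ge> 0)}"

end

theory Submission
  imports Defs
begin


lemma realize:
  "\<exists>gs::nat\<Rightarrow>nat. (\<forall>j < (\<Sum>i<K. s i). gs j < K) \<and>
      (\<forall>c<K. card {j. j < (\<Sum>i<K. s i) \<and> gs j = c} = s c)"
proof (induction K)
  case 0
  then show ?case by simp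
next
  case (Suc K)
  then obtain gs where g1: "\<forall>j < (\<Sum>i<K. s i). gs j < K"
    and g2: "\<forall>c<K. card {j. j < (\<Sum>i<K. s i) \<and> gs j = c} = s c" by blast
  define N where "N = (\<Sum>i<K. s i)"
  define gs' where "gs' = (\<lambda>j. if j < N then gs j else K)"
  have S: "(\<Sum>i<Suc K. s i) = N + s K" by (simp add: N_def)
  show ?case
  proof (intro exI conjI allI impI)
    fix j assume "j < (\<Sum>i<Suc K. s i)"
    then show "gs' j < Suc K" using g1 by (auto simp: gs'_def N_def)
  next
    fix c assume c: "c < Suc K"
    show "card {j. j < (\<Sum>i<Suc K. s i) \<and> gs' j = c} = s c"
    proof (cases "c = K")
      case True
      have "{j. j < (\<Sum>i<Suc K. s i) \<and> gs' j = c} = {N..<N + s K}"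
        using g1 True unfolding S gs'_def N_def apply auto using not_le by blast
      then show ?thesis using True by simp
    next
      case False
      have "{j. j < (\<Sum>i<Suc K. s i) \<and> gs' j = c} = {j. j < N \<and> gs j = c}"
        using False by (auto simp: S gs'_def N_def)
      then show ?thesis using g2 False c by (simp add: N_def)
    qed
  qed
qed

lemma prod_count:
  fixes f :: "nat \<Rightarrow> 'b::comm_monoid_mult" and N :: nat
  assumes "\<forall>j<N. gs j < K"
  shows "(\<Prod>j<N. f (gs j)) = (\<Prod>c<K. f c ^ card {j. j<N \<and> gs j = c})"
  using assms
proof (induction N)
  case 0
  then show ?case by simp
next
  case (Suc N)
  have IH: "(\<Prod>j<N. f (gs j)) = (\<Prod>c<K. f c ^ card {j. j<N \<and> gs j = c})"
    using Suc by simp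
  have gN: "gs N < K" using Suc.prems by simp
  have card: "card {j. j<Suc N \<and> gs j = c} = card {j. j<N \<and> gs j = c} + (if gs N = c then 1 else 0)" for c
  proof (cases "gs N = c")
    case True
    then have "{j. j<Suc N \<and> gs j = c} = insert N {j. j<N \<and> gs j = c}" by auto
    then show ?thesis using True by simp
  next
    case False
    then have "{j. j<Suc N \<and> gs j = c} = {j. j<N \<and> gs j = c}" using less_Suc_eq by auto
    then show ?thesis using False by simp
  qed
  have "(\<Prod>c<K. f c ^ card {j. j<Suc N \<and> gs j = c})
      = (\<Prod>c<K. f c ^ card {j. j<N \<and> gs j = c} * (if c = gs N then f c else 1))"
    by (rule prod.cong) (auto simp: card power_add)
  also have "\<dots> = (\<Prod>c<K. f c ^ card {j. j<N \<and> gs j = c}) * f (gs N)"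
    using gN by (simp add: prod.distrib prod.delta)
  finally show ?case using IH by simp
qed

lemma mono_step:
  fixes f :: "nat \<Rightarrow> 'b::comm_monoid_mult"
  assumes "g < k"
  shows "(\<Prod>i<k. f i ^ (s(g := s g + 1)) i) = f g * (\<Prod>i<k. f i ^ s i)"
proof -
  have "(\<Prod>i<k. f i ^ (s(g := s g + 1)) i) = (\<Prod>i<k. f i ^ s i * (if i = g then f i else 1))"
    by (rule prod.cong) (auto simp: mult.commute)
  also have "\<dots> = (\<Prod>i<k. f i ^ s i) * f g" using assms by (simp add: prod.distrib prod.delta)
  finally show ?thesis by (simp add: mult.commute)
qed

lemma mono_add:
  fixes f :: "nat \<Rightarrow> 'b::comm_monoid_mult"
  shows "(\<Prod>i<k. f i ^ s i) * (\<Prod>i<k. f i ^ t i) = (\<Prod>i<k. f i ^ (s i + t i))"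
  by (simp add: prod.distrib power_add)

lemma shift_eq:
  fixes s s' :: "nat \<Rightarrow> nat"
  assumes "s' g = s g + 1" "s' i + 1 = s i" "\<forall>m. m \<noteq> g \<and> m \<noteq> i \<longrightarrow> s' m = s m"
  shows "s(g := s g + 1) = s'(i := s' i + 1)"
proof -
  have "g \<noteq> i"
  proof
    assume "g = i"
    then have "s' i = s i + 1" "s' i + 1 = s i" using assms(1,2) by auto
    then show False by linarith
  qed
  then show ?thesis using assms by (auto simp: fun_eq_iff)
qed

lemma sum_split: "(\<Sum>j<l+(k::nat). f j) = (\<Sum>j<l. f j) + (\<Sum>j<k. f (l+j))"
  by (induction k) (simp_all add: add.assoc)

lemma alpha_pos: assumes "1 \<le> l" "\<forall>i<l. a i > 0" shows "alpha l a > 0"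
proof -
  have "0 \<notin> a`{..<l}" using assms by auto
  then have "Lcm (a`{..<l}) \<noteq> 0" using Lcm_0_iff[of "a`{..<l}"] by auto
  then show ?thesis unfolding alpha_def by (simp only: neq0_conv)
qed

lemma a_dvd_alpha: "i < l \<Longrightarrow> a i dvd alpha l a"
  by (simp add: alpha_def)

lemma mexp_pos: assumes "i < l" "a i > 0" "n i > 0" "1 \<le> l" "\<forall>i<l. a i > 0" shows "mexp l a n i > 0"
proof -
  obtain t where t: "alpha l a = a i * t" using a_dvd_alpha[OF assms(1)] by blast
  have "t > 0" using alpha_pos[OF assms(4,5)] t by (cases t) auto
  have "mexp l a n i = n i * t" using t assms(2) by (simp add: mexp_def)
  then show ?thesis using \<open>t>0\<close> assms(3) by simp
qed



lemma ofr_re: "complex_of_real (Re (x * cnj x)) = x * cnj x"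
  by (simp add: complex_mult_cnj)

lemma re_nonneg: "Re (x * cnj x) \<ge> 0"
  by (simp add: complex_mult_cnj)

lemma shell_moment:
  assumes "z \<in> shell (typeI_matrix l a n) l k" "i < l"
  shows "- of_nat (a i) * (z i * cnj (z i)) + of_nat (n i) * (\<Sum>j<k. z (l+j) * cnj (z (l+j))) = 0"
proof -
  let ?A = "typeI_matrix l a n"
  have "(1/2) * (\<Sum>j<l+k. of_int (?A i j) * (z j * cnj (z j))) = (0::complex)"
    using assms by (simp add: shell_def)
  then have S: "(\<Sum>j<l+k. of_int (?A i j) * (z j * cnj (z j))) = (0::complex)" by simp
  have s1: "(\<Sum>j<l. of_int (?A i j) * (z j * cnj (z j))) = - of_nat (a i) * (z i * cnj (z i))"
  proof -
    have "(\<Sum>j<l. of_int (?A i j) * (z j * cnj (z j))) =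
        (\<Sum>j<l. if j = i then - of_nat (a i) * (z i * cnj (z i)) else (0::complex))"
      by (rule sum.cong) (auto simp: typeI_matrix_def)
    then show ?thesis using assms(2) by (simp add: sum.delta)
  qed
  have s2: "(\<Sum>j<k. of_int (?A i (l+j)) * (z (l+j) * cnj (z (l+j)))) =
      of_nat (n i) * (\<Sum>j<k. z (l+j) * cnj (z (l+j)))"
    by (simp add: typeI_matrix_def sum_distrib_left)
  show ?thesis using S s1 s2 sum_split[of "\<lambda>j. of_int (?A i j) * (z j * cnj (z j))" l k] by simp
qed

lemma forward:
  assumes "z \<in> shell (typeI_matrix l a n) l k"
  shows "hilbert_map l k a n z \<in> image_desc l k a n"
proof -
  let ?r = "inv_r l z" and ?p = "inv_p l k z" and ?q = "inv_q l k a n z"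
  define C where "C = (\<Prod>i<l. z i ^ mexp l a n i)"
  define W where "W = (\<lambda>s. \<Prod>i<k. z (l+i) ^ s i)"
  have pz: "?p g h = z (l+g) * cnj (z (l+h))" if "g<k" "h<k" for g h
    using that by (simp add: inv_p_def)
  have qz: "?q s = C * W s" if "s \<in> Sset l k a" for s
    using that by (simp add: inv_q_def C_def W_def)
  have W_step: "z (l+g) * W s = W (s(g := s g + 1))" if "g < k" for g s
    using mono_step[OF that, of "\<lambda>i. z (l+i)" s] by (simp add: W_def)
  have W_shift: "z (l+g) * W s = z (l+i) * W s'"
    if "g<k" "i<k" "s' g = s g + 1" "s' i + 1 = s i" "\<forall>m. m \<noteq> g \<and> m \<noteq> i \<longrightarrow> s' m = s m"
    for g i s s'
    using W_step[OF that(1), of s] W_step[OF that(2), of s'] shift_eq[OF that(3-5)] by simp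
  have c0: "\<forall>i\<ge>l. ?r i = 0" by (simp add: inv_r_def)
  have c1: "\<forall>i j. \<not> (i < k \<and> j < k) \<longrightarrow> ?p i j = 0" by (simp add: inv_p_def)
  have c2: "\<forall>s. s \<notin> Sset l k a \<longrightarrow> ?q s = 0" by (simp add: inv_q_def)
  have c3: "\<forall>i<k. \<forall>j<k. ?p i j = cnj (?p j i)" by (simp add: pz)
  have c4: "\<forall>g<k. \<forall>h<k. \<forall>i<k. \<forall>j<k. ?p g h * ?p i j - ?p g j * ?p i h = 0"
    by (simp add: pz)
  have c5: "\<forall>g<k. \<forall>h<k. \<forall>i<k. \<forall>s\<in>Sset l k a. \<forall>s'\<in>Sset l k a.
        s' g = s g + 1 \<and> s' i + 1 = s i \<and> (\<forall>m. m \<noteq> g \<and> m \<noteq> i \<longrightarrow> s' m = s m) \<longrightarrow>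
        ?p g h * ?q s - ?p i h * ?q s' = 0"
  proof (intro allI impI ballI)
    fix g h i s s'
    assume h: "g<k" "h<k" "i<k" "s \<in> Sset l k a" "s' \<in> Sset l k a"
      "s' g = s g + 1 \<and> s' i + 1 = s i \<and> (\<forall>m. m \<noteq> g \<and> m \<noteq> i \<longrightarrow> s' m = s m)"
    have "z (l+g) * W s = z (l+i) * W s'" using W_shift[of g i s' s] h by blast
    then have "(z (l+g) * W s) * (cnj (z (l+h)) * C) = (z (l+i) * W s') * (cnj (z (l+h)) * C)" by simp
    then show "?p g h * ?q s - ?p i h * ?q s' = 0"
      using h by (simp add: pz qz algebra_simps)
  qed
  have c6: "\<forall>g<k. \<forall>h<k. \<forall>i<k. \<forall>s\<in>Sset l k a. \<forall>s'\<in>Sset l k a.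
        s' h = s h + 1 \<and> s' i + 1 = s i \<and> (\<forall>m. m \<noteq> h \<and> m \<noteq> i \<longrightarrow> s' m = s m) \<longrightarrow>
        ?p g h * cnj (?q s) - ?p g i * cnj (?q s') = 0"
  proof (intro allI impI ballI)
    fix g h i s s'
    assume h: "g<k" "h<k" "i<k" "s \<in> Sset l k a" "s' \<in> Sset l k a"
      "s' h = s h + 1 \<and> s' i + 1 = s i \<and> (\<forall>m. m \<noteq> h \<and> m \<noteq> i \<longrightarrow> s' m = s m)"
    have "z (l+h) * W s = z (l+i) * W s'" using W_shift[of h i s' s] h by blast
    then have "cnj (z (l+h) * W s) * (z (l+g) * cnj C) = cnj (z (l+i) * W s') * (z (l+g) * cnj C)" by simp
    then show "?p g h * cnj (?q s) - ?p g i * cnj (?q s') = 0"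
      using h by (simp add: pz qz algebra_simps)
  qed
  have WW: "W s * W s' = W t * W t'" if "\<forall>m. s m + s' m = t m + t' m" for s s' t t'
    using that by (simp add: W_def mono_add)
  have c7: "\<forall>s\<in>Sset l k a. \<forall>s'\<in>Sset l k a. \<forall>t\<in>Sset l k a. \<forall>t'\<in>Sset l k a.
        (\<forall>m. s m + s' m = t m + t' m) \<longrightarrow> ?q s * ?q s' - ?q t * ?q t' = 0"
  proof (intro allI impI ballI)
    fix s s' t t' assume h: "s\<in>Sset l k a" "s'\<in>Sset l k a" "t\<in>Sset l k a" "t'\<in>Sset l k a"
      "\<forall>m. s m + s' m = t m + t' m"
    have "C * C * (W s * W s') = C * C * (W t * W t')" using WW[OF h(5)] by simp
    then show "?q s * ?q s' - ?q t * ?q t' = 0" using h by (simp add: qz algebra_simps)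
  qed
  have c8: "\<forall>s\<in>Sset l k a. \<forall>s'\<in>Sset l k a. \<forall>t\<in>Sset l k a. \<forall>t'\<in>Sset l k a.
        (\<forall>m. s m + s' m = t m + t' m) \<longrightarrow> cnj (?q s) * cnj (?q s') - cnj (?q t) * cnj (?q t') = 0"
  proof (intro allI impI ballI)
    fix s s' t t' assume h: "s\<in>Sset l k a" "s'\<in>Sset l k a" "t\<in>Sset l k a" "t'\<in>Sset l k a"
      "\<forall>m. s m + s' m = t m + t' m"
    have "?q s * ?q s' - ?q t * ?q t' = 0" using c7 h by blast
    then have "cnj (?q s * ?q s' - ?q t * ?q t') = 0" by simp
    then show "cnj (?q s) * cnj (?q s') - cnj (?q t) * cnj (?q t') = 0" by simp
  qed
  have c9: "\<forall>gs hs :: nat \<Rightarrow> nat. \<forall>s\<in>Sset l k a. \<forall>s'\<in>Sset l k a.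
        (\<forall>j<alpha l a. gs j < k \<and> hs j < k) \<and>
        (\<forall>c<k. card {j. j < alpha l a \<and> gs j = c} = s c) \<and>
        (\<forall>c<k. card {j. j < alpha l a \<and> hs j = c} = s' c) \<longrightarrow>
        (\<Prod>i<l. complex_of_real (?r i) ^ mexp l a n i) * (\<Prod>j<alpha l a. ?p (gs j) (hs j))
          - ?q s * cnj (?q s') = 0"
  proof (intro allI impI ballI)
    fix gs hs :: "nat \<Rightarrow> nat" and s s'
    assume h: "s\<in>Sset l k a" "s'\<in>Sset l k a"
      "(\<forall>j<alpha l a. gs j < k \<and> hs j < k) \<and>
        (\<forall>c<k. card {j. j < alpha l a \<and> gs j = c} = s c) \<and>
        (\<forall>c<k. card {j. j < alpha l a \<and> hs j = c} = s' c)"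
    have R: "(\<Prod>i<l. complex_of_real (?r i) ^ mexp l a n i) = C * cnj C"
    proof -
      have "(\<Prod>i<l. complex_of_real (?r i) ^ mexp l a n i) = (\<Prod>i<l. (z i * cnj (z i)) ^ mexp l a n i)"
      proof (rule prod.cong)
        fix i assume "i \<in> {..<l}"
        then have "complex_of_real (?r i) = z i * cnj (z i)" unfolding inv_r_def
          using ofr_re[of "z i"] by (simp only: lessThan_iff if_True)
        then show "complex_of_real (?r i) ^ mexp l a n i = (z i * cnj (z i)) ^ mexp l a n i" by simp
      qed simp
      then show ?thesis by (simp add: C_def power_mult_distrib prod.distrib)
    qed
    have g: "(\<Prod>j<alpha l a. z (l + gs j)) = W s"
      using prod_count[of "alpha l a" gs k "\<lambda>c. z (l+c)"] h by (simp add: W_def)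
    have hh: "(\<Prod>j<alpha l a. z (l + hs j)) = W s'"
      using prod_count[of "alpha l a" hs k "\<lambda>c. z (l+c)"] h by (simp add: W_def)
    have P: "(\<Prod>j<alpha l a. ?p (gs j) (hs j)) = W s * cnj (W s')"
    proof -
      have "(\<Prod>j<alpha l a. ?p (gs j) (hs j)) = (\<Prod>j<alpha l a. z (l + gs j) * cnj (z (l + hs j)))"
        by (rule prod.cong) (use h in \<open>auto simp: pz\<close>)
      also have "\<dots> = (\<Prod>j<alpha l a. z (l + gs j)) * cnj (\<Prod>j<alpha l a. z (l + hs j))"
        by (simp add: prod.distrib)
      finally show ?thesis using g hh by simp
    qed
    show "(\<Prod>i<l. complex_of_real (?r i) ^ mexp l a n i) * (\<Prod>j<alpha l a. ?p (gs j) (hs j))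
          - ?q s * cnj (?q s') = 0"
      using h by (simp add: R P qz)
  qed
  have c10: "\<forall>i<l. - of_nat (a i) * complex_of_real (?r i) + of_nat (n i) * (\<Sum>j<k. ?p j j) = 0"
  proof (intro allI impI)
    fix i assume i: "i < l"
    have rr: "complex_of_real (?r i) = z i * cnj (z i)" unfolding inv_r_def
      using ofr_re[of "z i"] i by (simp only: if_True)
    have "(\<Sum>j<k. ?p j j) = (\<Sum>j<k. z (l+j) * cnj (z (l+j)))" by (rule sum.cong) (auto simp: pz)
    then show "- of_nat (a i) * complex_of_real (?r i) + of_nat (n i) * (\<Sum>j<k. ?p j j) = 0"
      unfolding rr using shell_moment[OF assms i] by simp
  qed
  have c11: "(\<forall>i<l. ?r i \<ge> 0) \<and> (\<forall>j<k. Im (?p j j) = 0 \<and> Re (?p j j) \<ge> 0)"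
    by (simp add: inv_r_def pz re_nonneg)
  show ?thesis unfolding hilbert_map_def image_desc_def mem_Collect_eq prod.case
    using c0 c1 c2 c3 c4 c5 c6 c7 c8 c9 c10 c11 by blast
qed



lemma rank1:
  fixes p :: "nat \<Rightarrow> nat \<Rightarrow> complex"
  assumes herm: "\<forall>i<k. \<forall>j<k. p i j = cnj (p j i)"
    and r1: "\<forall>g<k. \<forall>h<k. \<forall>i<k. \<forall>j<k. p g h * p i j - p g j * p i h = 0"
    and diag: "\<forall>j<k. Im (p j j) = 0 \<and> Re (p j j) \<ge> 0"
  shows "\<exists>w. \<forall>i<k. \<forall>j<k. p i j = w i * cnj (w j)"
proof (cases "\<forall>j<k. p j j = 0")
  case True
  show ?thesis
  proof (intro exI allI impI)
    fix i j assume ij: "i<k" "j<k"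
    have "p i j * p j i - p i i * p j j = 0" using r1 ij by blast
    moreover have "p j i = cnj (p i j)" using herm ij by blast
    ultimately have "p i j * cnj (p i j) = 0" using True ij by simp
    then show "p i j = (\<lambda>_. 0) i * cnj ((\<lambda>_. 0) j)" by simp
  qed
next
  case False
  then obtain j0 where j0: "j0 < k" "p j0 j0 \<noteq> 0" by blast
  have pre: "p j0 j0 = complex_of_real (Re (p j0 j0))" using diag j0 by (simp add: complex_eq_iff)
  have rpos: "Re (p j0 j0) > 0"
  proof -
    have "Re (p j0 j0) \<noteq> 0" using pre j0(2) by auto
    then show ?thesis using diag j0(1) by force
  qed
  define d where "d = sqrt (Re (p j0 j0))"
  have dd: "complex_of_real d * complex_of_real d = p j0 j0"
    using rpos pre by (simp add: d_def flip: of_real_mult)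
  have dnz: "complex_of_real d \<noteq> 0" using rpos by (simp add: d_def)
  show ?thesis
  proof (intro exI allI impI)
    fix i j assume ij: "i<k" "j<k"
    have e: "p i j0 * p j0 j - p i j * p j0 j0 = 0" using r1 ij j0 by blast
    have "p j0 j = cnj (p j j0)" using herm ij j0 by blast
    then have "(p i j0 / complex_of_real d) * cnj (p j j0 / complex_of_real d) = p i j0 * p j0 j / (complex_of_real d * complex_of_real d)"
      by simp
    also have "\<dots> = p i j0 * p j0 j / p j0 j0" by (simp only: dd)
    also have "\<dots> = p i j" using e j0 by (simp add: field_simps)
    finally show "p i j = (\<lambda>i. p i j0 / complex_of_real d) i * cnj ((\<lambda>i. p i j0 / complex_of_real d) j)"
      by simp
  qed
qed



lemma qrel:
  fixes p :: "nat \<Rightarrow> nat \<Rightarrow> complex" and r :: "nat \<Rightarrow> real"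
  assumes r6: "\<forall>gs hs :: nat \<Rightarrow> nat. \<forall>s\<in>Sset l k a. \<forall>s'\<in>Sset l k a.
        (\<forall>j<alpha l a. gs j < k \<and> hs j < k) \<and>
        (\<forall>c<k. card {j. j < alpha l a \<and> gs j = c} = s c) \<and>
        (\<forall>c<k. card {j. j < alpha l a \<and> hs j = c} = s' c) \<longrightarrow>
        (\<Prod>i<l. complex_of_real (r i) ^ mexp l a n i) * (\<Prod>j<alpha l a. p (gs j) (hs j))
          - q s * cnj (q s') = 0"
    and pw: "\<forall>i<k. \<forall>j<k. p i j = w i * cnj (w j)"
    and s: "s \<in> Sset l k a" and s': "s' \<in> Sset l k a"
  shows "(\<Prod>i<l. complex_of_real (r i) ^ mexp l a n i) *
           ((\<Prod>i<k. w i ^ s i) * cnj (\<Prod>i<k. w i ^ s' i)) = q s * cnj (q s')"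
proof -
  have ss: "(\<Sum>i<k. s i) = alpha l a" using s by (simp add: Sset_def)
  have ss': "(\<Sum>i<k. s' i) = alpha l a" using s' by (simp add: Sset_def)
  obtain gs :: "nat \<Rightarrow> nat" where g1: "\<forall>j < alpha l a. gs j < k"
    and g2: "\<forall>c<k. card {j. j < alpha l a \<and> gs j = c} = s c"
    using realize[of s k] ss by auto
  obtain hs :: "nat \<Rightarrow> nat" where h1: "\<forall>j < alpha l a. hs j < k"
    and h2: "\<forall>c<k. card {j. j < alpha l a \<and> hs j = c} = s' c"
    using realize[of s' k] ss' by auto
  have E: "(\<Prod>i<l. complex_of_real (r i) ^ mexp l a n i) * (\<Prod>j<alpha l a. p (gs j) (hs j))
          - q s * cnj (q s') = 0"
    using r6 s s' g1 g2 h1 h2 by blast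
  have g: "(\<Prod>j<alpha l a. w (gs j)) = (\<Prod>i<k. w i ^ s i)"
    using prod_count[of "alpha l a" gs k w] g1 g2 by simp
  have hh: "(\<Prod>j<alpha l a. w (hs j)) = (\<Prod>i<k. w i ^ s' i)"
    using prod_count[of "alpha l a" hs k w] h1 h2 by simp
  have "(\<Prod>j<alpha l a. p (gs j) (hs j)) = (\<Prod>j<alpha l a. w (gs j) * cnj (w (hs j)))"
    by (rule prod.cong) (use g1 h1 pw in auto)
  also have "\<dots> = (\<Prod>j<alpha l a. w (gs j)) * cnj (\<Prod>j<alpha l a. w (hs j))"
    by (simp add: prod.distrib)
  finally have P: "(\<Prod>j<alpha l a. p (gs j) (hs j)) = (\<Prod>i<k. w i ^ s i) * cnj (\<Prod>i<k. w i ^ s' i)"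
    using g hh by simp
  show ?thesis using E P by simp
qed

lemma cnj_zero: "x * cnj x = 0 \<Longrightarrow> (x::complex) = 0" by simp

lemma lemmaA:
  fixes W q :: "(nat \<Rightarrow> nat) \<Rightarrow> complex" and R :: complex
  assumes qr: "\<forall>s\<in>S. \<forall>s'\<in>S. R * (W s * cnj (W s')) = q s * cnj (q s')"
    and RX: "R = complex_of_real X" and X: "X \<ge> 0"
    and cases: "(\<forall>s\<in>S. W s = 0) \<or> (\<exists>s0\<in>S. W s0 \<noteq> 0)"
  shows "\<exists>c. c * cnj c = R \<and> (\<forall>s\<in>S. q s = c * W s)"
proof (cases "\<forall>s\<in>S. W s = 0")
  case True
  show ?thesis
  proof (intro exI conjI ballI)
    show "complex_of_real (sqrt X) * cnj (complex_of_real (sqrt X)) = R"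
      using X RX by (simp flip: of_real_mult)
  next
    fix s assume s: "s \<in> S"
    have "q s * cnj (q s) = 0" using qr s True by force
    then show "q s = complex_of_real (sqrt X) * W s" using True s by simp
  qed
next
  case False
  then obtain s0 where s0: "s0 \<in> S" "W s0 \<noteq> 0" using cases by blast
  define c where "c = q s0 / W s0"
  have q0: "R * (W s0 * cnj (W s0)) = q s0 * cnj (q s0)" using qr s0 by blast
  have Wn: "W s0 * cnj (W s0) \<noteq> 0" using s0 by simp
  have cc: "c * cnj c = R"
  proof -
    have "c * cnj c = q s0 * cnj (q s0) / (W s0 * cnj (W s0))" by (simp add: c_def)
    also have "\<dots> = R" using Wn by (simp add: q0[symmetric])
    finally show ?thesis .
  qed
  show ?thesis
  proof (intro exI conjI ballI)
    show "c * cnj c = R" by (rule cc)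
  next
    fix s assume s: "s \<in> S"
    have qs: "R * (W s * cnj (W s0)) = q s * cnj (q s0)" using qr s s0 by blast
    show "q s = c * W s"
    proof (cases "q s0 = 0")
      case True
      then have "R = 0" using q0 Wn by simp
      then have "q s * cnj (q s) = 0" using qr s by force
      then show ?thesis using True by (simp add: c_def)
    next
      case False
      have "c * W s * cnj (q s0) = q s0 * cnj (q s0) * W s / W s0" by (simp add: c_def)
      also have "\<dots> = R * (W s0 * cnj (W s0)) * W s / W s0" using q0 by simp
      also have "\<dots> = R * (W s * cnj (W s0))" using s0 by (simp add: field_simps)
      also have "\<dots> = q s * cnj (q s0)" by (rule qs)
      finally show ?thesis using False by simp
    qed
  qed
qed

lemma lemmaB:
  fixes r :: "nat \<Rightarrow> real" and m :: "nat \<Rightarrow> nat" and c :: complex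
  assumes rnn: "\<forall>i<l. r i \<ge> 0" and m0: "m 0 > 0" and l: "1 \<le> l"
    and cc: "c * cnj c = (\<Prod>i<l. complex_of_real (r i) ^ m i)"
  shows "\<exists>zz. (\<forall>i<l. zz i * cnj (zz i) = complex_of_real (r i)) \<and> (\<Prod>i<l. zz i ^ m i) = c"
proof (cases "c = 0")
  case True
  define zz where "zz = (\<lambda>i. complex_of_real (sqrt (r i)))"
  have zc: "zz i * cnj (zz i) = complex_of_real (r i)" if "i<l" for i
    using rnn that by (simp add: zz_def flip: of_real_mult)
  have "(\<Prod>i<l. complex_of_real (r i) ^ m i) = 0" using cc True by simp
  then obtain i where i: "i<l" "complex_of_real (r i) ^ m i = 0" by auto
  then have "r i = 0" "m i \<noteq> 0" by auto
  then have "zz i ^ m i = 0" by (simp add: zz_def)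
  then have "(\<Prod>i<l. zz i ^ m i) = 0" using i(1) by (auto intro: prod_zero)
  then show ?thesis using zc True by blast
next
  case False
  define u where "u = cis (Arg c / real (m 0))"
  define zz where "zz = (\<lambda>i. complex_of_real (sqrt (r i)) * (if i = 0 then u else 1))"
  have uu: "u * cnj u = 1" by (simp add: u_def cis_cnj cis_mult)
  have zc: "zz i * cnj (zz i) = complex_of_real (r i)" if "i<l" for i
  proof -
    have "zz i * cnj (zz i) = complex_of_real (sqrt (r i)) * complex_of_real (sqrt (r i)) * (if i = 0 then u * cnj u else 1)"
      by (cases "i = 0") (simp_all add: zz_def ac_simps)
    also have "\<dots> = complex_of_real (sqrt (r i) * sqrt (r i))" using uu by (simp flip: of_real_mult)
    also have "\<dots> = complex_of_real (r i)" using rnn that by simp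
    finally show ?thesis .
  qed
  have um: "u ^ m 0 = cis (Arg c)" using m0 by (simp add: u_def DeMoivre)
  have P1: "(\<Prod>i<l. zz i ^ m i) = complex_of_real (\<Prod>i<l. sqrt (r i) ^ m i) * (\<Prod>i<l. (if i = 0 then u else 1) ^ m i)"
    by (simp add: zz_def power_mult_distrib prod.distrib)
  have P2: "(\<Prod>i<l. (if i = 0 then u else (1::complex)) ^ m i) = u ^ m 0"
  proof -
    have "(\<Prod>i<l. (if i = 0 then u else (1::complex)) ^ m i) = (\<Prod>i<l. if i = 0 then u ^ m 0 else 1)"
      by (rule prod.cong) auto
    then show ?thesis using l by (simp add: prod.delta)
  qed
  define X where "X = (\<Prod>i<l. r i ^ m i)"
  have Xc: "complex_of_real X = c * cnj c" using cc by (simp add: X_def)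
  have "complex_of_real ((cmod c)\<^sup>2) = complex_of_real X" using Xc complex_norm_square[of c] by simp
  then have nX: "(cmod c)\<^sup>2 = X" using of_real_eq_iff by blast
  have sq: "(\<Prod>i<l. sqrt (r i) ^ m i)\<^sup>2 = X"
  proof -
    have pc: "(x ^ j)^2 = (x ^ 2) ^ j" for x :: real and j :: nat
      by (simp add: power_mult[symmetric] mult.commute)
    have "(\<Prod>i<l. sqrt (r i) ^ m i)\<^sup>2 = (\<Prod>i<l. (sqrt (r i) ^ m i)^2)"
      by (simp add: prod_power_distrib)
    also have "\<dots> = (\<Prod>i<l. (sqrt (r i) ^ 2) ^ m i)" by (simp only: pc)
    also have "\<dots> = X" unfolding X_def by (rule prod.cong) (use rnn in auto)
    finally show ?thesis .
  qed
  have nn: "(\<Prod>i<l. sqrt (r i) ^ m i) \<ge> 0" by (intro prod_nonneg) (use rnn in auto)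
  have eqn: "(\<Prod>i<l. sqrt (r i) ^ m i) = cmod c"
    using sq nX nn by (metis norm_ge_zero power2_eq_iff_nonneg)
  have "(\<Prod>i<l. zz i ^ m i) = complex_of_real (cmod c) * cis (Arg c)"
    using P1 P2 um eqn by simp
  also have "\<dots> = c" using rcis_cmod_Arg[of c] by (simp add: rcis_def)
  finally show ?thesis using zc by blast
qed



lemma backward:
  assumes l: "1 \<le> l" and apos: "\<forall>i<l. a i > 0" and npos: "\<forall>i<l. n i > 0"
    and x: "(r,p,q) \<in> image_desc l k a n"
  shows "(r,p,q) \<in> hilbert_map l k a n ` shell (typeI_matrix l a n) l k"
proof -
  note X = x[unfolded image_desc_def mem_Collect_eq prod.case]
  have h0: "\<forall>i\<ge>l. r i = 0" by (rule X[THEN conjunct1])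
  have h1: "\<forall>i j. \<not> (i < k \<and> j < k) \<longrightarrow> p i j = 0" by (rule X[THEN conjunct2, THEN conjunct1])
  have h2: "\<forall>s. s \<notin> Sset l k a \<longrightarrow> q s = 0" by (rule X[THEN conjunct2, THEN conjunct2, THEN conjunct1])
  have herm: "\<forall>i<k. \<forall>j<k. p i j = cnj (p j i)" by (rule X[THEN conjunct2, THEN conjunct2, THEN conjunct2, THEN conjunct1])
  have r1: "\<forall>g<k. \<forall>h<k. \<forall>i<k. \<forall>j<k. p g h * p i j - p g j * p i h = 0" by (rule X[THEN conjunct2, THEN conjunct2, THEN conjunct2, THEN conjunct2, THEN conjunct1])
  have r6: "\<forall>gs hs :: nat \<Rightarrow> nat. \<forall>s\<in>Sset l k a. \<forall>s'\<in>Sset l k a.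
        (\<forall>j<alpha l a. gs j < k \<and> hs j < k) \<and>
        (\<forall>c<k. card {j. j < alpha l a \<and> gs j = c} = s c) \<and>
        (\<forall>c<k. card {j. j < alpha l a \<and> hs j = c} = s' c) \<longrightarrow>
        (\<Prod>i<l. complex_of_real (r i) ^ mexp l a n i) * (\<Prod>j<alpha l a. p (gs j) (hs j))
          - q s * cnj (q s') = 0" by (rule X[THEN conjunct2, THEN conjunct2, THEN conjunct2, THEN conjunct2, THEN conjunct2, THEN conjunct2, THEN conjunct2, THEN conjunct2, THEN conjunct2, THEN conjunct1])
  have mom: "\<forall>i<l. - of_nat (a i) * complex_of_real (r i) + of_nat (n i) * (\<Sum>j<k. p j j) = 0"
    by (rule X[THEN conjunct2, THEN conjunct2, THEN conjunct2, THEN conjunct2, THEN conjunct2, THEN conjunct2, THEN conjunct2, THEN conjunct2, THEN conjunct2, THEN conjunct2, THEN conjunct1])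
  have rnn: "\<forall>i<l. r i \<ge> 0" by (rule X[THEN conjunct2, THEN conjunct2, THEN conjunct2, THEN conjunct2, THEN conjunct2, THEN conjunct2, THEN conjunct2, THEN conjunct2, THEN conjunct2, THEN conjunct2, THEN conjunct2, THEN conjunct1])
  have diag: "\<forall>j<k. Im (p j j) = 0 \<and> Re (p j j) \<ge> 0" by (rule X[THEN conjunct2, THEN conjunct2, THEN conjunct2, THEN conjunct2, THEN conjunct2, THEN conjunct2, THEN conjunct2, THEN conjunct2, THEN conjunct2, THEN conjunct2, THEN conjunct2, THEN conjunct2])
  obtain w where pw: "\<forall>i<k. \<forall>j<k. p i j = w i * cnj (w j)" using rank1[OF herm r1 diag] by blast
  define W where "W = (\<lambda>s. \<Prod>i<k. w i ^ s i)"
  define R where "R = (\<Prod>i<l. complex_of_real (r i) ^ mexp l a n i)"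
  define XX where "XX = (\<Prod>i<l. r i ^ mexp l a n i)"
  have RX: "R = complex_of_real XX" by (simp add: R_def XX_def)
  have XXn: "XX \<ge> 0" unfolding XX_def by (intro prod_nonneg) (use rnn in auto)
  have qr: "\<forall>s\<in>Sset l k a. \<forall>s'\<in>Sset l k a. R * (W s * cnj (W s')) = q s * cnj (q s')"
    using qrel[OF r6 pw] by (simp add: R_def W_def)
  have apos': "alpha l a > 0" using alpha_pos[OF l apos] .
  have cases: "(\<forall>s\<in>Sset l k a. W s = 0) \<or> (\<exists>s0\<in>Sset l k a. W s0 \<noteq> 0)"
  proof (cases "\<forall>i<k. w i = 0")
    case True
    have "W s = 0" if s: "s \<in> Sset l k a" for s
    proof -
      have "(\<Sum>i<k. s i) = alpha l a" using s by (simp add: Sset_def)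
      then obtain i where i: "i < k" "s i \<noteq> 0" using apos'
        by (metis (no_types, lifting) lessThan_iff less_not_refl2 sum.neutral)
      then have "w i ^ s i = 0" using True by simp
      then show ?thesis unfolding W_def using i by (auto intro: prod_zero)
    qed
    then show ?thesis by blast
  next
    case False
    then obtain j0 where j0: "j0 < k" "w j0 \<noteq> 0" by blast
    define s0 where "s0 = (\<lambda>i. if i = j0 then alpha l a else 0)"
    have s0S: "s0 \<in> Sset l k a" using j0 by (auto simp: Sset_def s0_def sum.delta)
    have "W s0 = (\<Prod>i<k. if i = j0 then w i ^ alpha l a else 1)"
      unfolding W_def s0_def by (rule prod.cong) auto
    also have "\<dots> = w j0 ^ alpha l a" using j0 by (simp add: prod.delta)
    finally have "W s0 \<noteq> 0" using j0 by simp
    then show ?thesis using s0S by blast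
  qed
  obtain c where cc: "c * cnj c = R" and qc: "\<forall>s\<in>Sset l k a. q s = c * W s"
    using lemmaA[OF qr RX XXn cases] by blast
  have m0: "mexp l a n 0 > 0" using mexp_pos[of 0 l a n] l apos npos by simp
  obtain zz where zr: "\<forall>i<l. zz i * cnj (zz i) = complex_of_real (r i)"
    and zp: "(\<Prod>i<l. zz i ^ mexp l a n i) = c"
    using lemmaB[of l r "mexp l a n" c, OF rnn m0 l] cc by (auto simp: R_def)
  define z where "z = (\<lambda>j. if j < l then zz j else if j < l + k then w (j - l) else 0)"
  have zl: "z (l + j) = w j" if "j < k" for j using that by (simp add: z_def)
  have zi: "z i = zz i" if "i < l" for i using that by (simp add: z_def)
  have inva: "in_VA l k z" by (simp add: in_VA_def z_def)
  have sh: "z \<in> shell (typeI_matrix l a n) l k"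
    unfolding shell_def mem_Collect_eq
  proof (intro conjI inva allI impI)
    fix i assume i: "i < l"
    let ?A = "typeI_matrix l a n"
    have s1: "(\<Sum>j<l. of_int (?A i j) * (z j * cnj (z j))) = - of_nat (a i) * complex_of_real (r i)"
    proof -
      have "(\<Sum>j<l. of_int (?A i j) * (z j * cnj (z j))) =
          (\<Sum>j<l. if j = i then - of_nat (a i) * (z i * cnj (z i)) else (0::complex))"
        by (rule sum.cong) (auto simp: typeI_matrix_def)
      also have "\<dots> = - of_nat (a i) * (z i * cnj (z i))" using i by (simp add: sum.delta)
      finally show ?thesis using zr zi i by simp
    qed
    have s2: "(\<Sum>j<k. of_int (?A i (l+j)) * (z (l+j) * cnj (z (l+j)))) =
        of_nat (n i) * (\<Sum>j<k. p j j)"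
    proof -
      have "(\<Sum>j<k. of_int (?A i (l+j)) * (z (l+j) * cnj (z (l+j)))) =
          (\<Sum>j<k. of_nat (n i) * p j j)"
        by (rule sum.cong) (auto simp: typeI_matrix_def zl pw)
      then show ?thesis by (simp add: sum_distrib_left)
    qed
    have "(\<Sum>j<l+k. of_int (?A i j) * (z j * cnj (z j))) = (0::complex)"
      using sum_split[of "\<lambda>j. of_int (?A i j) * (z j * cnj (z j))" l k] s1 s2 mom i by simp
    then show "(1/2) * (\<Sum>j<l+k. of_int (?A i j) * (z j * cnj (z j))) = (0::complex)" by simp
  qed
  have e1: "inv_r l z = r"
  proof
    fix i show "inv_r l z i = r i"
    proof (cases "i < l")
      case True
      then have "z i * cnj (z i) = complex_of_real (r i)" using zr zi by simp
      then have "Re (z i * cnj (z i)) = r i" by simp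
      then show ?thesis using True by (simp add: inv_r_def)
    qed (use h0 in \<open>auto simp: inv_r_def\<close>)
  qed
  have e2: "inv_p l k z = p"
  proof (intro ext)
    fix i j show "inv_p l k z i j = p i j"
      using h1 pw by (auto simp: inv_p_def zl)
  qed
  have e3: "inv_q l k a n z = q"
  proof
    fix s show "inv_q l k a n z s = q s"
    proof (cases "s \<in> Sset l k a")
      case True
      have "(\<Prod>i<l. z i ^ mexp l a n i) = c" using zp zi by simp
      moreover have "(\<Prod>i<k. z (l+i) ^ s i) = W s" unfolding W_def using zl by simp
      ultimately show ?thesis using True qc by (simp add: inv_q_def)
    qed (use h2 in \<open>auto simp: inv_q_def\<close>)
  qed
  have "hilbert_map l k a n z = (r,p,q)" by (simp add: hilbert_map_def e1 e2 e3)
  then show ?thesis using sh by force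
qed


theorem proposition4p4:
  fixes l k :: nat and a n :: "nat \<Rightarrow> nat"
  assumes "1 \<le> l" and "1 \<le> k"
    and "\<forall>i<l. a i > 0" and "\<forall>i<l. n i > 0"
    and "faithful (typeI_matrix l a n) l k"
  shows "hilbert_map l k a n ` shell (typeI_matrix l a n) l k = image_desc l k a n"
proof
  show "hilbert_map l k a n ` shell (typeI_matrix l a n) l k \<subseteq> image_desc l k a n"
    using forward by blast
next
  show "image_desc l k a n \<subseteq> hilbert_map l k a n ` shell (typeI_matrix l a n) l k"
  proof
    fix x assume x: "x \<in> image_desc l k a n"
    obtain r p q where "x = (r, p, q)" by (cases x) auto
    then show "x \<in> hilbert_map l k a n ` shell (typeI_matrix l a n) l k"
      using backward[OF assms(1,3,4)] x by simp
  qed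
qed

end
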